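(* Let $h$ be a positive integer and $L$ an $h$-modular lattice with zero. Let $x\in\mathcal{A}'$ and let $n,k$ be nonnegative integers. If $n\geq d(x)$, then $x^{(k)}(a_n)=x(a_\infty)$ and $x^{(k)}(b_n)=x(b_\infty)$. In particular, $d(x^{(k)})\leq d(x)$.
   Context: $K$ is the lattice consisting of $\varnothing$, $C=\{c\}$, $A_m=\{a_k:k\geq m\}$, $B_n=\{b_k:k\geq n\}$ ($m,n<\omega$), and $C\cup A_m\cup B_n$ with $|m-n|\leq1$, ordered by inclusion; $a_n,b_n,c$ denote $A_n,B_n,C$, so $\mathrm{J}(K)=\{c\}\cup\{a_n\}\cup\{b_n\}$ with $a_0>a_1>\cdots$, $b_0>b_1>\cdots$ and no other comparabilities. $\mathcal{A}$ is the set of antitone maps $x\colon\mathrm{J}(K)\to L$ ($p\leq q\Rightarrow x(p)\geq x(q)$) with finite range. For $x\in\mathcal{A}$, $x(a_\infty)$, $x(b_\infty)$ are the eventual values of the increasing sequences $(x(a_n))$, $(x(b_n))$, and $d(x)$ is the least $d\geq0$ with $x(a_n)=x(a_\infty)$ and $x(b_n)=x(b_\infty)$ for all $n\geq d$. The map $x^{(1)}$ is defined by $x^{(1)}(c)=x(c)\vee(x(a_\infty)\wedge x(b_\infty))$, $x^{(1)}(a_0)=x(a_0)$, $x^{(1)}(b_0)=x(b_0)$, $x^{(1)}(a_{n+1})=x(a_{n+1})\vee(x(b_n)\wedge x(c))$, $x^{(1)}(b_{n+1})=x(b_{n+1})\vee(x(a_n)\wedge x(c))$; $\mathcal{A}$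 is closed under $x\mapsto x^{(1)}$, and $x^{(0)}=x$, $x^{(k+1)}=(x^{(k)})^{(1)}$. Put $\ell(x)=\langle x(a_\infty),x(b_\infty),x(c)\rangle$ and $\mathcal{A}'=\{x\in\mathcal{A}:\ell(x^{(1)})=\ell(x)\}$. $L$ is $h$-modular if $u^{(h+1)}=u^{(h)}$ for all $u\in L^3$, where $\langle x,y,z\rangle^{(1)}=\langle x\vee(y\wedge z),y\vee(x\wedge z),z\vee(x\wedge y)\rangle$. *)

theory Defs
  imports Main
begin

text \<open>Join-irreducibles of K: c, a_n, b_n.\<close>
datatype jk = C | A nat | B nat

fun jle :: "jk \<Rightarrow> jk \<Rightarrow> bool" where
  "jle C C = True"
| "jle (A m) (A n) = (n \<le> m)"
| "jle (B m) (B n) = (n \<le> m)"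
| "jle _ _ = False"

definition antitone_J :: "(jk \<Rightarrow> 'a::order) \<Rightarrow> bool" where
  "antitone_J x \<longleftrightarrow> (\<forall>p q. jle p q \<longrightarrow> x q \<le> x p)"

definition calA :: "(jk \<Rightarrow> 'a::lattice) set" where
  "calA = {x. antitone_J x \<and> finite (range x)}"

definition ainf :: "(jk \<Rightarrow> 'a) \<Rightarrow> 'a" where
  "ainf x = (THE v. \<exists>N. \<forall>n\<ge>N. x (A n) = v)"

definition binf :: "(jk \<Rightarrow> 'a) \<Rightarrow> 'a" where
  "binf x = (THE v. \<exists>N. \<forall>n\<ge>N. x (B n) = v)"

definition dd :: "(jk \<Rightarrow> 'a) \<Rightarrow> nat" where
  "dd x = (LEAST d. \<forall>n\<ge>d. x (A n) = ainf x \<and> x (B n) = binf x)"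

fun step :: "(jk \<Rightarrow> 'a::lattice) \<Rightarrow> jk \<Rightarrow> 'a" where
  "step x C = sup (x C) (inf (ainf x) (binf x))"
| "step x (A 0) = x (A 0)"
| "step x (B 0) = x (B 0)"
| "step x (A (Suc n)) = sup (x (A (Suc n))) (inf (x (B n)) (x C))"
| "step x (B (Suc n)) = sup (x (B (Suc n))) (inf (x (A n)) (x C))"

definition ell :: "(jk \<Rightarrow> 'a) \<Rightarrow> 'a \<times> 'a \<times> 'a" where
  "ell x = (ainf x, binf x, x C)"

definition calA' :: "(jk \<Rightarrow> 'a::lattice) set" where
  "calA' = {x \<in> calA. ell (step x) = ell x}"

fun tstep :: "'a::lattice \<times> 'a \<times> 'a \<Rightarrow> 'a \<times> 'a \<times> 'a" where
  "tstep (x, y, z) = (sup x (inf y z), sup y (inf x z), sup z (inf x y))"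

definition h_modular :: "nat \<Rightarrow> 'a::lattice itself \<Rightarrow> bool" where
  "h_modular h _ \<longleftrightarrow> (\<forall>u :: 'a \<times> 'a \<times> 'a. (tstep ^^ (h + 1)) u = (tstep ^^ h) u)"

end

theory Submission
  imports Defs "HOL-Library.Infinite_Set"
begin

lemma evconst:
  fixes f :: "nat \<Rightarrow> 'a::order"
  assumes mono: "\<And>m n. m \<le> n \<Longrightarrow> f m \<le> f n" and fin: "finite (range f)"
  shows "\<exists>v N. (\<forall>n\<ge>N. f n = v) \<and> (\<forall>n. f n \<le> v)"
proof -
  obtain v where v: "v \<in> range f" and inf: "infinite (f -` {v})"
    using inf_img_fin_dom[OF fin] by auto
  have ub: "\<forall>m. \<exists>n\<ge>m. n \<in> f -` {v}"
    using inf infinite_nat_iff_unbounded_le by blast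
  obtain N where N: "f N = v" using v by auto
  have le: "f n \<le> v" for n
  proof -
    obtain m where "m \<ge> n" "f m = v" using ub by blast
    thus ?thesis using mono by metis
  qed
  have "\<forall>n\<ge>N. f n = v"
  proof (intro allI impI)
    fix n assume "N \<le> n"
    hence "v \<le> f n" using mono N by blast
    thus "f n = v" using le[of n] by (rule order.antisym[rotated])
  qed
  thus ?thesis using le by blast
qed

lemma ainf_eq:
  assumes "\<forall>n\<ge>N. x (A n) = v" shows "ainf x = v"
  unfolding ainf_def
proof (rule the_equality)
  show "\<exists>N. \<forall>n\<ge>N. x (A n) = v" using assms by blast
next
  fix w assume "\<exists>N. \<forall>n\<ge>N. x (A n) = w"
  then obtain M where "\<forall>n\<ge>M. x (A n) = w" by blast
  thus "w = v" using assms by (metis max.cobounded1 max.cobounded2)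
qed

lemma binf_eq:
  assumes "\<forall>n\<ge>N. x (B n) = v" shows "binf x = v"
  unfolding binf_def
proof (rule the_equality)
  show "\<exists>N. \<forall>n\<ge>N. x (B n) = v" using assms by blast
next
  fix w assume "\<exists>N. \<forall>n\<ge>N. x (B n) = w"
  then obtain M where "\<forall>n\<ge>M. x (B n) = w" by blast
  thus "w = v" using assms by (metis max.cobounded1 max.cobounded2)
qed

theorem lemma5p4:
  fixes h :: nat and x :: "jk \<Rightarrow> 'a::bounded_lattice_bot"
  assumes "h > 0" and "h_modular h TYPE('a)" and "x \<in> calA'"
  shows "(\<forall>n k. n \<ge> dd x \<longrightarrow>
            (step ^^ k) x (A n) = ainf x \<and> (step ^^ k) x (B n) = binf x)
         \<and> (\<forall>k. dd ((step ^^ k) x) \<le> dd x)"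
proof -
  have at: "antitone_J x" and fr: "finite (range x)" and el: "ell (step x) = ell x"
    using assms(3) unfolding calA'_def calA_def by auto
  have frA: "finite (range (\<lambda>n. x (A n)))"
    by (rule finite_subset[OF _ fr]) auto
  have frB: "finite (range (\<lambda>n. x (B n)))"
    by (rule finite_subset[OF _ fr]) auto
  have mA: "m \<le> n \<Longrightarrow> x (A m) \<le> x (A n)" for m n
    using at unfolding antitone_J_def by (metis jle.simps(2))
  have mB: "m \<le> n \<Longrightarrow> x (B m) \<le> x (B n)" for m n
    using at unfolding antitone_J_def by (metis jle.simps(3))
  obtain va NA where NA: "\<forall>n\<ge>NA. x (A n) = va" and leA: "\<forall>n. x (A n) \<le> va"
    using evconst[of "\<lambda>n. x (A n)", OF mA frA] by blast
  obtain vb NB where NB: "\<forall>n\<ge>NB. x (B n) = vb" and leB: "\<forall>n. x (B n) \<le> vb"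
    using evconst[of "\<lambda>n. x (B n)", OF mB frB] by blast
  have ava: "ainf x = va" using ainf_eq[OF NA] .
  have bvb: "binf x = vb" using binf_eq[OF NB] .
  define P where "P = (\<lambda>d. \<forall>n\<ge>d. x (A n) = ainf x \<and> x (B n) = binf x)"
  have "P (max NA NB)" unfolding P_def using NA NB ava bvb by auto
  hence Pd: "P (dd x)" unfolding dd_def P_def[symmetric] by (rule LeastI)
  define d where "d = dd x"
  have Pd': "\<forall>n\<ge>d. x (A n) = va \<and> x (B n) = vb" using Pd ava bvb unfolding P_def d_def by auto
  have s1: "\<forall>n\<ge>d. step x (A (Suc n)) = sup va (inf vb (x C))" using Pd' by auto
  have "ainf (step x) = sup va (inf vb (x C))"
  proof (rule ainf_eq[of "Suc d"], intro allI impI)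
    fix n assume "Suc d \<le> n"
    then obtain m where "n = Suc m" "m \<ge> d" by (cases n) auto
    thus "step x (A n) = sup va (inf vb (x C))" using s1 by simp
  qed
  moreover have "ainf (step x) = ainf x" using el unfolding ell_def by simp
  ultimately have "sup va (inf vb (x C)) = va" using ava by simp
  hence c1: "inf vb (x C) \<le> va" by (metis sup.cobounded2)
  have s2: "\<forall>n\<ge>d. step x (B (Suc n)) = sup vb (inf va (x C))" using Pd' by auto
  have "binf (step x) = sup vb (inf va (x C))"
  proof (rule binf_eq[of "Suc d"], intro allI impI)
    fix n assume "Suc d \<le> n"
    then obtain m where "n = Suc m" "m \<ge> d" by (cases n) auto
    thus "step x (B n) = sup vb (inf va (x C))" using s2 by simp
  qed
  moreover have "binf (step x) = binf x" using el unfolding ell_def by simp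
  ultimately have "sup vb (inf va (x C)) = vb" using bvb by simp
  hence c2: "inf va (x C) \<le> vb" by (metis sup.cobounded2)
  have "step x C = x C" using el unfolding ell_def by simp
  hence "sup (x C) (inf va vb) = x C" using ava bvb by simp
  hence c3: "inf va vb \<le> x C" by (metis sup.cobounded2)
  have inv: "(step ^^ k) x C = x C \<and> (\<forall>n. (step ^^ k) x (A n) \<le> va \<and> (step ^^ k) x (B n) \<le> vb)
      \<and> (\<forall>n\<ge>d. (step ^^ k) x (A n) = va \<and> (step ^^ k) x (B n) = vb)" for k
  proof (induction k)
    case 0
    then show ?case using leA leB Pd' by simp
  next
    case (Suc k)
    define y where "y = (step ^^ k) x"
    have IH: "y C = x C" "\<And>n. y (A n) \<le> va" "\<And>n. y (B n) \<le> vb"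
      "\<And>n. n \<ge> d \<Longrightarrow> y (A n) = va" "\<And>n. n \<ge> d \<Longrightarrow> y (B n) = vb"
      using Suc.IH unfolding y_def by auto
    have ya: "ainf y = va" by (rule ainf_eq[of d]) (simp add: IH)
    have yb: "binf y = vb" by (rule binf_eq[of d]) (simp add: IH)
    have e: "(step ^^ Suc k) x = step y" by (simp add: y_def)
    have C: "step y C = x C" using IH ya yb c3 by (simp add: sup_absorb1)
    have LA: "step y (A n) \<le> va" for n
    proof (cases n)
      case 0 then show ?thesis using IH by simp
    next
      case (Suc m)
      have "inf (y (B m)) (y C) \<le> va"
        using IH(1) IH(3)[of m] c1 by (metis inf_mono order_refl order_trans)
      thus ?thesis using Suc IH(2) by simp
    qed
    have LB: "step y (B n) \<le> vb" for n
    proof (cases n)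
      case 0 then show ?thesis using IH by simp
    next
      case (Suc m)
      have "inf (y (A m)) (y C) \<le> vb"
        using IH(1) IH(2)[of m] c2 by (metis inf_mono order_refl order_trans)
      thus ?thesis using Suc IH(3) by simp
    qed
    have GA: "step y (A n) = va" if "n \<ge> d" for n
    proof (cases n)
      case 0 then show ?thesis using IH that by simp
    next
      case (Suc m)
      have "va \<le> step y (A n)" using Suc IH(4)[OF that] by simp
      thus ?thesis using LA[of n] by simp
    qed
    have GB: "step y (B n) = vb" if "n \<ge> d" for n
    proof (cases n)
      case 0 then show ?thesis using IH that by simp
    next
      case (Suc m)
      have "vb \<le> step y (B n)" using Suc IH(5)[OF that] by simp
      thus ?thesis using LB[of n] by simp
    qed
    show ?case unfolding e using C LA LB GA GB by blast
  qed
  have part1: "\<forall>n k. n \<ge> dd x \<longrightarrow>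
            (step ^^ k) x (A n) = ainf x \<and> (step ^^ k) x (B n) = binf x"
    using inv ava bvb d_def by auto
  have part2: "dd ((step ^^ k) x) \<le> dd x" for k
  proof -
    have a: "ainf ((step ^^ k) x) = va" by (rule ainf_eq[of d]) (simp add: inv)
    have b: "binf ((step ^^ k) x) = vb" by (rule binf_eq[of d]) (simp add: inv)
    have "dd ((step ^^ k) x) \<le> d" unfolding dd_def[of "(step ^^ k) x"]
      by (rule Least_le) (simp add: a b inv)
    thus ?thesis by (simp add: d_def)
  qed
  show ?thesis using part1 part2 by blast
qed

end
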